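(* Let $p>1$, $n\in\mathbb{N}$ and $\mathbf{k}$ as below. The entropy density $f_{p,\mathbf{k},n}(\alpha)$ is non-increasing in $\alpha\in(0,\infty)$: if $0<\alpha_1<\alpha_2$ then $f_{p,\mathbf{k},n}(\alpha_1)\ge f_{p,\mathbf{k},n}(\alpha_2)$.
   Context: $\mathbf{k}=(k_1,\dots,k_{m+1})$ integers with $0=k_1<\cdots<k_{m+1}=n$. For $\mathbf{x}\in\mathbb{R}^n$ put $\mathbf{x}_j=(x_{k_j+1},\dots,x_{k_{j+1}})$, $\|\mathbf{x}\|_{p,\mathbf{k},n}=(\sum_{j=1}^m\|\mathbf{x}_j\|_2^p)^{1/p}$ ($\|\cdot\|_2$ Euclidean norm), $d(\mathbf{x},\mathbf{y})=\|\mathbf{y}-\mathbf{x}\|_{p,\mathbf{k},n}$, $B(\mathbf{x},r)=\{\mathbf{y}:d(\mathbf{x},\mathbf{y})\le r\}$, and $r_n$ is the radius with $\mathrm{vol}(B(\mathbf 0,r_n))=1$. For bounded measurable $S\subseteq\mathbb{R}^n$ and integer $t\ge1$ let $\hat Z_S(t)=\frac1{t!}\int_{S^t}\mathbf 1[d(\mathbf{x}_i,\mathbf{x}_j)\ge2r_n\ \forall i\ne j]\,d\mathbf{x}_1\cdots d\mathbf{x}_t$, $\hat Z_S(0)=1$. With $V=V(R)=\mathrm{vol}(B(\mathbf 0,R))=(R/r_n)^n$, the entropy density is $$f_{p,\mathbf{k},n}(\alpha)=\lim_{R\to\infty}\frac{1}{\alpha V}\log\frac{\hat Z_{B(\mathbf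 0,R)}(\lfloor\alpha V\rfloor)}{V^{\lfloor\alpha V\rfloor}/\lfloor\alpha V\rfloor!}$$ (interpreted as $\liminf$ if the limit does not exist, with the convention $\log0=-\infty$, so values lie in $[-\infty,\infty)$). *)

theory Defs
  imports "HOL-Analysis.Analysis" "HOL-Probability.Probability"
begin

text \<open>Points of R^n are functions nat => real extensional on {..<n} (coordinates
 indexed 0..n-1). The block vector k is given by k 0 = 0 < k 1 < ... < k m = n;
 block j (j < m) consists of coordinates k j, ..., k (j+1) - 1.\<close>

definition Rn :: "nat \<Rightarrow> (nat \<Rightarrow> real) measure" where
  "Rn n = PiM {..<n} (\<lambda>_. lborel)"

definition vol :: "nat \<Rightarrow> (nat \<Rightarrow> real) set \<Rightarrow> real" where
  "vol n S = measure (Rn n) S"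

definition pknorm :: "real \<Rightarrow> (nat \<Rightarrow> nat) \<Rightarrow> nat \<Rightarrow> (nat \<Rightarrow> real) \<Rightarrow> real" where
  "pknorm p k m x = (\<Sum>j<m. (sqrt (\<Sum>i\<in>{k j..<k (Suc j)}. (x i)^2)) powr p) powr (1/p)"

definition pkdist :: "real \<Rightarrow> (nat \<Rightarrow> nat) \<Rightarrow> nat \<Rightarrow> (nat \<Rightarrow> real) \<Rightarrow> (nat \<Rightarrow> real) \<Rightarrow> real" where
  "pkdist p k m x y = pknorm p k m (\<lambda>i. y i - x i)"

definition pkball :: "real \<Rightarrow> (nat \<Rightarrow> nat) \<Rightarrow> nat \<Rightarrow> nat \<Rightarrow> (nat \<Rightarrow> real) \<Rightarrow> real \<Rightarrow> (nat \<Rightarrow> real) set" where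
  "pkball p k m n x r = {y \<in> space (Rn n). pkdist p k m x y \<le> r}"

definition origin :: "nat \<Rightarrow> nat \<Rightarrow> real" where
  "origin n = (\<lambda>i\<in>{..<n}. 0)"

definition unit_radius :: "real \<Rightarrow> (nat \<Rightarrow> nat) \<Rightarrow> nat \<Rightarrow> nat \<Rightarrow> real" where
  "unit_radius p k m n = (THE r. 0 < r \<and> vol n (pkball p k m n (origin n) r) = 1)"

definition Zhat :: "real \<Rightarrow> (nat \<Rightarrow> nat) \<Rightarrow> nat \<Rightarrow> nat \<Rightarrow> (nat \<Rightarrow> real) set \<Rightarrow> nat \<Rightarrow> real" where
  "Zhat p k m n S t = (if t = 0 then 1 else
     measure (PiM {..<t} (\<lambda>_. Rn n))
       {xs \<in> PiE {..<t} (\<lambda>_. S). \<forall>i<t. \<forall>j<t. i \<noteq> j \<longrightarrow>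
           pkdist p k m (xs i) (xs j) \<ge> 2 * unit_radius p k m n} / fact t)"

text \<open>The quantity whose liminf as R -> infinity is the entropy density; log 0 = -infinity.\<close>
definition entropy_quot :: "real \<Rightarrow> (nat \<Rightarrow> nat) \<Rightarrow> nat \<Rightarrow> nat \<Rightarrow> real \<Rightarrow> real \<Rightarrow> ereal" where
  "entropy_quot p k m n \<alpha> R =
    (let V = vol n (pkball p k m n (origin n) R);
         N = nat \<lfloor>\<alpha> * V\<rfloor>;
         Z = Zhat p k m n (pkball p k m n (origin n) R) N
     in if Z = 0 then -\<infinity> else ereal (ln (Z / (V ^ N / fact N)) / (\<alpha> * V)))"

definition entropy_density :: "real \<Rightarrow> (nat \<Rightarrow> nat) \<Rightarrow> nat \<Rightarrow> nat \<Rightarrow> real \<Rightarrow> ereal" where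
  "entropy_density p k m n \<alpha> = Liminf at_top (entropy_quot p k m n \<alpha>)"

end

theory Submission
  imports Defs
begin

lemma ennreal_pow_le_imp_le:
  fixes a b :: ennreal
  assumes "a ^ k \<le> b ^ k" "k > 0"
  shows "a \<le> b"
proof (rule ccontr)
  assume "\<not> a \<le> b"
  then have ba: "b < a" by simp
  then have "b < top" using top.not_eq_extremum by fastforce
  then obtain r where r: "b = ennreal r" "r \<ge> 0" by (cases b) auto
  show False
  proof (cases "a = top")
    case True
    then have "b ^ k = top" using assms by (simp add: top_unique)
    then show False using \<open>b < top\<close> assms(2) by (simp add: power_eq_top_ennreal)
  next
    case False
    then obtain s where s: "a = ennreal s" "s \<ge> 0" by (cases a) auto
    have "r < s" using ba r s by (simp add: ennreal_less_iff)
    then have "r ^ k < s ^ k" using r assms(2) by (simp add: power_strict_mono)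
    moreover have "s ^ k \<le> r ^ k" using assms(1) r s by (simp add: ennreal_power)
    ultimately show False by simp
  qed
qed

lemma amgm_pow:
  fixes x :: "'a \<Rightarrow> real"
  assumes "finite S" "S \<noteq> {}" "\<And>i. i \<in> S \<Longrightarrow> x i \<ge> 0"
  shows "(\<Prod>i\<in>S. x i) \<le> ((\<Sum>i\<in>S. x i) / card S) ^ card S"
proof -
  have k: "card S > 0" using assms by (simp add: card_gt_0_iff)
  have P: "(\<Prod>i\<in>S. x i) \<ge> 0" using assms by (simp add: prod_nonneg)
  have "(\<Prod>i\<in>S. x i) powr (1 / card S) \<le> (\<Sum>i \<in> S. x i / card S)"
    using arith_geom_mean[OF assms] .
  also have "\<dots> = (\<Sum>i\<in>S. x i) / card S" by (simp add: sum_divide_distrib)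
  finally have 1: "(\<Prod>i\<in>S. x i) powr (1 / card S) \<le> (\<Sum>i\<in>S. x i) / card S" .
  have "(\<Prod>i\<in>S. x i) = ((\<Prod>i\<in>S. x i) powr (1 / card S)) ^ card S"
  proof (cases "(\<Prod>i\<in>S. x i) = 0")
    case True then show ?thesis using k by simp
  next
    case False
    then have "(\<Prod>i\<in>S. x i) > 0" using P by simp
    then show ?thesis using k by (simp add: powr_realpow[symmetric] powr_powr)
  qed
  also have "\<dots> \<le> ((\<Sum>i\<in>S. x i) / card S) ^ card S"
    by (rule power_mono[OF 1]) simp
  finally show ?thesis .
qed

lemma amgm_ennreal:
  fixes x :: "'a \<Rightarrow> ennreal"
  assumes "finite S" "S \<noteq> {}"
  shows "(\<Prod>i\<in>S. x i) \<le> ((\<Sum>i\<in>S. x i) / of_nat (card S)) ^ card S"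
proof (cases "\<exists>i\<in>S. x i = top")
  case True
  then obtain j where j: "j \<in> S" "x j = top" by auto
  have "(\<Sum>i\<in>S. x i) = top" using j assms(1) ennreal_sum_eq_top by blast
  moreover have "top / of_nat (card S) = (top::ennreal)"
    using assms by (simp add: divide_ennreal_def card_gt_0_iff)
  ultimately have "(\<Sum>i\<in>S. x i) / of_nat (card S) = top" by simp
  then show ?thesis using assms by (simp add: card_gt_0_iff)
next
  case False
  then have fin: "\<And>i. i \<in> S \<Longrightarrow> x i = ennreal (enn2real (x i))"
    by (simp add: less_top)
  define y where "y i = enn2real (x i)" for i
  have "(\<Prod>i\<in>S. x i) = (\<Prod>i\<in>S. ennreal (y i))" using fin y_def by (auto intro!: prod.cong)
  also have "\<dots> = ennreal (\<Prod>i\<in>S. y i)" by (simp add: prod_ennreal y_def)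
  also have "\<dots> \<le> ennreal (((\<Sum>i\<in>S. y i) / card S) ^ card S)"
    using amgm_pow[OF assms, of y] by (intro ennreal_leI) (simp add: y_def)
  also have "\<dots> = ((\<Sum>i\<in>S. x i) / of_nat (card S)) ^ card S"
  proof -
    have "(\<Sum>i\<in>S. x i) = ennreal (\<Sum>i\<in>S. y i)"
      using fin y_def by (simp add: sum_ennreal[symmetric] y_def)
    then show ?thesis using assms
      by (simp add: ennreal_power[symmetric] divide_ennreal card_gt_0_iff sum_nonneg y_def ennreal_of_nat_eq_real_of_nat)
  qed
  finally show ?thesis .
qed


lemma amgm_ennreal':
  fixes x :: "'a \<Rightarrow> ennreal"
  assumes "finite S" "S \<noteq> {}"
  shows "(\<Prod>i\<in>S. x i) \<le> ((\<Sum>i\<in>S. x i) * ennreal (1 / real (card S))) ^ card S"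
proof -
  have "(\<Sum>i\<in>S. x i) / of_nat (card S) = (\<Sum>i\<in>S. x i) * ennreal (1 / real (card S))"
  proof -
    have "real (card S) > 0" using assms by (simp add: card_gt_0_iff)
    then have "inverse (ennreal (real (card S))) = ennreal (1/real(card S))"
      by (subst inverse_ennreal) (auto simp: inverse_eq_divide)
    then show ?thesis
      by (simp add: divide_ennreal_def ennreal_of_nat_eq_real_of_nat)
  qed
  then show ?thesis using amgm_ennreal[OF assms, of x] by simp
qed

lemma holder_geo:
  fixes g :: "'a \<Rightarrow> ennreal" and \<phi> :: "'i \<Rightarrow> 'a \<Rightarrow> ennreal"
  assumes K: "finite K" "K \<noteq> {}"
    and gm: "g \<in> borel_measurable N" and \<phi>m: "\<And>i. i\<in>K \<Longrightarrow> \<phi> i \<in> borel_measurable N"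
    and le: "\<And>y. y \<in> space N \<Longrightarrow> g y ^ card K \<le> c * (\<Prod>i\<in>K. \<phi> i y)"
  shows "(\<integral>\<^sup>+y. g y \<partial>N) ^ card K \<le> c * (\<Prod>i\<in>K. \<integral>\<^sup>+y. \<phi> i y \<partial>N)"
proof -
  define k where "k = card K"
  have k: "k > 0" using K by (simp add: k_def card_gt_0_iff)
  define a where "a i = (\<integral>\<^sup>+y. \<phi> i y \<partial>N)" for i
  show ?thesis
  proof (cases "c = 0 \<or> (\<exists>i\<in>K. a i = 0)")
    case True
    have "AE y in N. g y = 0"
    proof (cases "c = 0")
      case True
      then show ?thesis using le k by (auto simp: k_def[symmetric])
    next
      case False
      with \<open>c = 0 \<or> (\<exists>i\<in>K. a i = 0)\<close> obtain j where j: "j \<in> K" "a j = 0" by auto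
      then have "AE y in N. \<phi> j y = 0" using \<phi>m[OF j(1)] by (simp add: a_def nn_integral_0_iff_AE)
      then show ?thesis using AE_space
      proof eventually_elim
        case (elim y)
        have "(\<Prod>i\<in>K. \<phi> i y) = 0" using elim j K by (intro prod_zero) auto
        then have "g y ^ k \<le> 0" using le[OF elim(2)] unfolding k_def by (metis mult_zero_right)
        then have "g y ^ k = 0" by simp
        then show ?case using k by simp
      qed
    qed
    then have "(\<integral>\<^sup>+y. g y \<partial>N) = 0" using gm by (simp add: nn_integral_0_iff_AE)
    then show ?thesis using k by (simp add: k_def power_0_left)
  next
    case False
    then have c0: "c \<noteq> 0" and a0: "\<And>i. i \<in> K \<Longrightarrow> a i \<noteq> 0" by auto
    have P0: "(\<Prod>i\<in>K. a i) \<noteq> 0" using a0 K by (simp add: prod_zero_iff)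
    show ?thesis
    proof (cases "c = top \<or> (\<exists>i\<in>K. a i = top)")
      case True
      have "c * (\<Prod>i\<in>K. a i) = top"
      proof (cases "c = top")
        case True
        then show ?thesis using P0 by (simp add: ennreal_mult_eq_top_iff)
      next
        case False
        with \<open>c = top \<or> (\<exists>i\<in>K. a i = top)\<close> obtain j where j: "j \<in> K" "a j = top" by auto
        have "(\<Prod>i\<in>K. a i) = a j * (\<Prod>i\<in>K-{j}. a i)" using j K by (simp add: prod.remove)
        moreover have "(\<Prod>i\<in>K-{j}. a i) \<noteq> 0" using a0 K by (simp add: prod_zero_iff)
        ultimately have "(\<Prod>i\<in>K. a i) = top" using j by (simp add: ennreal_mult_eq_top_iff)
        then show ?thesis using c0 by (simp add: ennreal_mult_eq_top_iff)
      qed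
      then show ?thesis by (simp add: a_def)
    next
      case False
      then have ctop: "c \<noteq> top" and atop: "\<And>i. i \<in> K \<Longrightarrow> a i \<noteq> top" by auto
      define cr where "cr = enn2real c"
      define ar where "ar i = enn2real (a i)" for i
      have c_eq: "c = ennreal cr" using ctop by (simp add: cr_def less_top)
      have a_eq: "\<And>i. i \<in> K \<Longrightarrow> a i = ennreal (ar i)" using atop by (simp add: ar_def less_top)
      have cr0: "cr > 0" using c0 ctop by (simp add: cr_def enn2real_positive_iff less_top zero_less_iff_neq_zero)
      have ar0: "\<And>i. i \<in> K \<Longrightarrow> ar i > 0" using a0 atop by (simp add: ar_def enn2real_positive_iff less_top zero_less_iff_neq_zero)
      define Cr where "Cr = root k (cr * (\<Prod>i\<in>K. ar i))"
      have Cpos: "cr * (\<Prod>i\<in>K. ar i) \<ge> 0" using cr0 ar0 by (simp add: less_imp_le prod_nonneg)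
      have Cr0: "Cr \<ge> 0" using Cpos k by (simp add: Cr_def real_root_ge_zero)
      have Crk: "Cr ^ k = cr * (\<Prod>i\<in>K. ar i)" using Cpos k by (simp add: Cr_def real_root_pow_pos2)
      have CK: "ennreal Cr ^ k = c * (\<Prod>i\<in>K. a i)"
        using Crk Cr0 cr0 ar0 by (simp add: ennreal_power c_eq a_eq ennreal_mult prod_ennreal less_imp_le prod_nonneg)
      define \<psi> where "\<psi> i y = \<phi> i y * ennreal (1 / ar i)" for i y
      define e where "e = ennreal (1 / real k)"
      have \<psi>m: "\<psi> i \<in> borel_measurable N" if i: "i\<in>K" for i
      proof -
        have [measurable]: "\<phi> i \<in> borel_measurable N" using \<phi>m[OF i] .
        show ?thesis unfolding \<psi>_def[abs_def] by measurable
      qed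
      have \<psi>int: "\<And>i. i\<in>K \<Longrightarrow> (\<integral>\<^sup>+y. \<psi> i y \<partial>N) = 1"
      proof -
        fix i assume i: "i \<in> K"
        have "(\<integral>\<^sup>+y. \<psi> i y \<partial>N) = a i * ennreal (1 / ar i)"
          unfolding \<psi>_def a_def by (rule nn_integral_multc[OF \<phi>m[OF i]])
        also have "\<dots> = 1" using ar0[OF i] by (simp add: a_eq[OF i] ennreal_mult[symmetric])
        finally show "(\<integral>\<^sup>+y. \<psi> i y \<partial>N) = 1" .
      qed
      have pw: "g y \<le> ennreal Cr * ((\<Sum>i\<in>K. \<psi> i y) * e)" if y: "y \<in> space N" for y
      proof (rule ennreal_pow_le_imp_le[OF _ k])
        have "g y ^ k \<le> c * (\<Prod>i\<in>K. \<phi> i y)" using le[OF y] by (simp add: k_def)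
        also have "(\<Prod>i\<in>K. \<phi> i y) = (\<Prod>i\<in>K. a i * \<psi> i y)"
        proof (rule prod.cong[OF refl])
          fix i assume i: "i \<in> K"
          have "a i * ennreal (1 / ar i) = 1" using ar0[OF i] by (simp add: a_eq[OF i] ennreal_mult[symmetric])
          then show "\<phi> i y = a i * \<psi> i y" unfolding \<psi>_def by (metis mult.assoc mult.commute mult_1)
        qed
        also have "c * \<dots> = ennreal Cr ^ k * (\<Prod>i\<in>K. \<psi> i y)"
          by (simp add: CK prod.distrib mult.assoc)
        also have "\<dots> \<le> ennreal Cr ^ k * ((\<Sum>i\<in>K. \<psi> i y) * e) ^ k"
          using amgm_ennreal'[OF K, of "\<lambda>i. \<psi> i y"] by (intro mult_left_mono) (auto simp: e_def k_def)
        also have "\<dots> = (ennreal Cr * ((\<Sum>i\<in>K. \<psi> i y) * e)) ^ k" by (simp add: power_mult_distrib)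
        finally show "g y ^ k \<le> (ennreal Cr * ((\<Sum>i\<in>K. \<psi> i y) * e)) ^ k" .
      qed
      have "(\<integral>\<^sup>+y. g y \<partial>N) \<le> (\<integral>\<^sup>+y. ennreal Cr * ((\<Sum>i\<in>K. \<psi> i y) * e) \<partial>N)"
        using pw by (intro nn_integral_mono) auto
      also have "\<dots> = ennreal Cr * ((\<Sum>i\<in>K. \<integral>\<^sup>+y. \<psi> i y \<partial>N) * e)"
        using \<psi>m by (simp add: nn_integral_cmult nn_integral_multc nn_integral_sum borel_measurable_sum)
      also have "\<dots> = ennreal Cr"
        using \<psi>int k by (simp add: e_def k_def ennreal_of_nat_eq_real_of_nat ennreal_mult[symmetric])
      finally have "(\<integral>\<^sup>+y. g y \<partial>N) ^ k \<le> ennreal Cr ^ k" by (rule power_mono_ennreal)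
      then show ?thesis using CK unfolding a_def k_def by simp
    qed
  qed
qed

lemma slice:
  assumes sf: "sigma_finite_measure N" and I: "finite I" "j \<notin> I"
    and E: "E \<in> sets (PiM (insert j I) (\<lambda>_. N))"
  shows "emeasure (PiM (insert j I) (\<lambda>_. N)) E =
           (\<integral>\<^sup>+y. emeasure (PiM I (\<lambda>_. N)) {x \<in> space (PiM I (\<lambda>_. N)). x(j:=y) \<in> E} \<partial>N)"
    and "(\<lambda>y. emeasure (PiM I (\<lambda>_. N)) {x \<in> space (PiM I (\<lambda>_. N)). x(j:=y) \<in> E}) \<in> borel_measurable N"
    and "\<And>y. y \<in> space N \<Longrightarrow> {x \<in> space (PiM I (\<lambda>_. N)). x(j:=y) \<in> E} \<in> sets (PiM I (\<lambda>_. N))"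
proof -
  interpret product_sigma_finite "\<lambda>_. N" using sf by (simp add: product_sigma_finite_def)
  interpret PI: finite_product_sigma_finite "\<lambda>_. N" I by standard (simp add: I)
  note [measurable] = E
  have sec: "{x \<in> space (PiM I (\<lambda>_. N)). x(j:=y) \<in> E} \<in> sets (PiM I (\<lambda>_. N))" if y: "y \<in> space N" for y
  proof -
    have "(\<lambda>x. x(j:=y)) \<in> measurable (PiM I (\<lambda>_. N)) (PiM (insert j I) (\<lambda>_. N))"
      using y by measurable
    from measurable_sets[OF this E] show ?thesis by (simp add: vimage_def Int_def conj_commute)
  qed
  then show "\<And>y. y \<in> space N \<Longrightarrow> {x \<in> space (PiM I (\<lambda>_. N)). x(j:=y) \<in> E} \<in> sets (PiM I (\<lambda>_. N))" .
  have eq: "(\<integral>\<^sup>+x. indicator E (x(j:=y)) \<partial>PiM I (\<lambda>_. N)) =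
      emeasure (PiM I (\<lambda>_. N)) {x \<in> space (PiM I (\<lambda>_. N)). x(j:=y) \<in> E}" if y: "y \<in> space N" for y
  proof -
    have "(\<integral>\<^sup>+x. indicator E (x(j:=y)) \<partial>PiM I (\<lambda>_. N)) =
       (\<integral>\<^sup>+x. indicator {x \<in> space (PiM I (\<lambda>_. N)). x(j:=y) \<in> E} x \<partial>PiM I (\<lambda>_. N))"
      by (intro nn_integral_cong) (auto simp: indicator_def)
    then show ?thesis using sec[OF y] by simp
  qed
  have "emeasure (PiM (insert j I) (\<lambda>_. N)) E = (\<integral>\<^sup>+x. indicator E x \<partial>PiM (insert j I) (\<lambda>_. N))"
    by simp
  also have "\<dots> = (\<integral>\<^sup>+y. (\<integral>\<^sup>+x. indicator E (x(j:=y)) \<partial>PiM I (\<lambda>_. N)) \<partial>N)"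
    by (rule product_nn_integral_insert_rev) (use I in auto)
  also have "\<dots> = (\<integral>\<^sup>+y. emeasure (PiM I (\<lambda>_. N)) {x \<in> space (PiM I (\<lambda>_. N)). x(j:=y) \<in> E} \<partial>N)"
    using eq by (intro nn_integral_cong) auto
  finally show "emeasure (PiM (insert j I) (\<lambda>_. N)) E =
           (\<integral>\<^sup>+y. emeasure (PiM I (\<lambda>_. N)) {x \<in> space (PiM I (\<lambda>_. N)). x(j:=y) \<in> E} \<partial>N)" .
  have "(\<lambda>y. \<integral>\<^sup>+x. indicator E (x(j:=y)) \<partial>PiM I (\<lambda>_. N)) \<in> borel_measurable N"
    by measurable
  then show "(\<lambda>y. emeasure (PiM I (\<lambda>_. N)) {x \<in> space (PiM I (\<lambda>_. N)). x(j:=y) \<in> E}) \<in> borel_measurable N"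
    by (rule measurable_cong[THEN iffD1, rotated]) (simp add: eq)
qed


lemma LW:
  assumes sf: "sigma_finite_measure N" and J: "finite J"
  shows "E \<in> sets (PiM J (\<lambda>_. N)) \<Longrightarrow> (\<forall>i\<in>J. F i \<in> sets (PiM (J-{i}) (\<lambda>_. N))) \<Longrightarrow>
    (\<forall>x\<in>E. \<forall>i\<in>J. restrict x (J-{i}) \<in> F i) \<Longrightarrow> (E \<noteq> {} \<or> 2 \<le> card J) \<Longrightarrow>
    emeasure (PiM J (\<lambda>_. N)) E ^ (card J - 1) \<le> (\<Prod>i\<in>J. emeasure (PiM (J-{i}) (\<lambda>_. N)) (F i))"
  using J
proof (induction J arbitrary: E F rule: finite_induct)
  case empty
  then show ?case by simp
next
  case (insert j I)
  show ?case
  proof (cases "I = {}")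
    case True
    then have Ene: "E \<noteq> {}" using insert.prems(4) by auto
    then obtain x where x: "x \<in> E" by auto
    have "restrict x (insert j I - {j}) \<in> F j" using insert.prems(3) x by blast
    moreover have "restrict x (insert j I - {j}) = (\<lambda>_. undefined)" using True by (auto simp: restrict_def)
    ultimately have "(\<lambda>_. undefined) \<in> F j" by simp
    moreover have "F j \<subseteq> {\<lambda>_. undefined}"
      using sets.sets_into_space[of "F j" "PiM {} (\<lambda>_. N)"] insert.prems(2) True
      by (auto simp: PiM_empty)
    ultimately have "F j = {\<lambda>_. undefined}" by auto
    then show ?thesis using True by simp
  next
    case False
    let ?P = "\<lambda>K. PiM K (\<lambda>_. N)"
    have cI: "card (insert j I) - 1 = card I" using insert.hyps by simp
    have kI: "card I > 0" using False insert.hyps by (simp add: card_gt_0_iff)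
    define Es where "Es y = {x \<in> space (?P I). x(j:=y) \<in> E}" for y
    define Fs where "Fs i y = {x \<in> space (?P (I-{i})). x(j:=y) \<in> F i}" for i y
    have ins: "\<And>i. i \<in> I \<Longrightarrow> insert j I - {i} = insert j (I - {i})" using insert.hyps by auto
    have Fj: "F j \<in> sets (?P I)" using insert.prems(2) insert.hyps by auto
    have Fi: "\<And>i. i \<in> I \<Longrightarrow> F i \<in> sets (?P (insert j (I-{i})))"
      using insert.prems(2) ins by (metis insertCI)
    note sE = slice[OF sf insert.hyps(1,2) insert.prems(1)]
    have sF: "emeasure (?P (insert j (I-{i}))) (F i) = (\<integral>\<^sup>+y. emeasure (?P (I-{i})) (Fs i y) \<partial>N)"
      "(\<lambda>y. emeasure (?P (I-{i})) (Fs i y)) \<in> borel_measurable N"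
      "\<And>y. y \<in> space N \<Longrightarrow> Fs i y \<in> sets (?P (I-{i}))" if i: "i \<in> I" for i
      using slice[OF sf _ _ Fi[OF i]] insert.hyps unfolding Fs_def by auto
    have pw: "emeasure (?P I) (Es y) ^ card I \<le> emeasure (?P I) (F j) * (\<Prod>i\<in>I. emeasure (?P (I-{i})) (Fs i y))"
      if y: "y \<in> space N" for y
    proof (cases "Es y = {}")
      case True
      then show ?thesis using kI by (simp add: power_0_left)
    next
      case False
      have EsS: "Es y \<in> sets (?P I)" using sE(3)[OF y] by (simp add: Es_def)
      have IH: "emeasure (?P I) (Es y) ^ (card I - 1) \<le> (\<Prod>i\<in>I. emeasure (?P (I-{i})) (Fs i y))"
      proof (rule insert.IH[OF EsS])
        show "\<forall>i\<in>I. Fs i y \<in> sets (?P (I-{i}))" using sF(3)[OF _ y] by auto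
        show "Es y \<noteq> {} \<or> 2 \<le> card I" using False by simp
        show "\<forall>x\<in>Es y. \<forall>i\<in>I. restrict x (I - {i}) \<in> Fs i y"
        proof (intro ballI)
          fix x i assume x: "x \<in> Es y" and i: "i \<in> I"
          have xs: "x \<in> space (?P I)" and xE: "x(j:=y) \<in> E" using x by (auto simp: Es_def)
          have "restrict (x(j:=y)) (insert j I - {i}) \<in> F i" using insert.prems(3) xE i by blast
          moreover have "restrict (x(j:=y)) (insert j I - {i}) = (restrict x (I - {i}))(j:=y)"
            using insert.hyps i by (auto simp: restrict_def fun_eq_iff)
          moreover have "restrict x (I - {i}) \<in> space (?P (I - {i}))"
            using xs by (auto simp: space_PiM PiE_def Pi_def extensional_def)
          ultimately show "restrict x (I - {i}) \<in> Fs i y" by (simp add: Fs_def)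
        qed
      qed
      have sub: "Es y \<subseteq> F j"
      proof
        fix x assume x: "x \<in> Es y"
        have xs: "x \<in> space (?P I)" and xE: "x(j:=y) \<in> E" using x by (auto simp: Es_def)
        have "restrict (x(j:=y)) (insert j I - {j}) \<in> F j" using insert.prems(3) xE by blast
        moreover have "restrict (x(j:=y)) (insert j I - {j}) = x"
          using xs insert.hyps by (auto simp: restrict_def fun_eq_iff space_PiM PiE_def extensional_def)
        ultimately show "x \<in> F j" by simp
      qed
      have le1: "emeasure (?P I) (Es y) \<le> emeasure (?P I) (F j)"
        using sub Fj by (rule emeasure_mono)
      have "emeasure (?P I) (Es y) ^ card I = emeasure (?P I) (Es y) * emeasure (?P I) (Es y) ^ (card I - 1)"
        using kI by (simp add: power_eq_if)
      also have "\<dots> \<le> emeasure (?P I) (F j) * (\<Prod>i\<in>I. emeasure (?P (I-{i})) (Fs i y))"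
        by (intro mult_mono le1 IH) auto
      finally show ?thesis .
    qed
    have "emeasure (?P (insert j I)) E ^ card I =
        (\<integral>\<^sup>+y. emeasure (?P I) (Es y) \<partial>N) ^ card I"
      using sE(1) by (simp add: Es_def)
    also have "\<dots> \<le> emeasure (?P I) (F j) * (\<Prod>i\<in>I. \<integral>\<^sup>+y. emeasure (?P (I-{i})) (Fs i y) \<partial>N)"
    proof (rule holder_geo[OF insert.hyps(1) False])
      show "(\<lambda>y. emeasure (?P I) (Es y)) \<in> borel_measurable N" using sE(2) by (simp add: Es_def)
      show "\<And>i. i \<in> I \<Longrightarrow> (\<lambda>y. emeasure (?P (I-{i})) (Fs i y)) \<in> borel_measurable N" using sF(2) .
      show "\<And>y. y \<in> space N \<Longrightarrow> emeasure (?P I) (Es y) ^ card I \<le> emeasure (?P I) (F j) * (\<Prod>i\<in>I. emeasure (?P (I-{i})) (Fs i y))"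
        using pw .
    qed
    also have "\<dots> = emeasure (?P I) (F j) * (\<Prod>i\<in>I. emeasure (?P (insert j I - {i})) (F i))"
      using sF(1) ins by (intro arg_cong2[where f="(*)"] prod.cong) auto
    also have "\<dots> = (\<Prod>i\<in>insert j I. emeasure (?P (insert j I - {i})) (F i))"
      using insert.hyps by (simp add: prod.insert)
    finally show ?thesis using cI by simp
  qed
qed

definition Sep :: "'a set \<Rightarrow> ('a \<Rightarrow> 'a \<Rightarrow> bool) \<Rightarrow> 'i set \<Rightarrow> ('i \<Rightarrow> 'a) set" where
  "Sep S D J = {xs \<in> PiE J (\<lambda>_. S). \<forall>i\<in>J. \<forall>j\<in>J. i \<noteq> j \<longrightarrow> D (xs i) (xs j)}"

lemma Sep_sets:
  assumes S: "S \<in> sets N" and D: "{z \<in> space (N \<Otimes>\<^sub>M N). D (fst z) (snd z)} \<in> sets (N \<Otimes>\<^sub>M N)"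
    and J: "finite J"
  shows "Sep S D J \<in> sets (PiM J (\<lambda>_. N))"
proof -
  have pij: "Measurable.pred (PiM J (\<lambda>_. N)) (\<lambda>xs. D (xs i) (xs j))" if "i \<in> J" "j \<in> J" for i j
  proof -
    have "(\<lambda>xs. (xs i, xs j)) \<in> measurable (PiM J (\<lambda>_. N)) (N \<Otimes>\<^sub>M N)"
      using that by measurable
    from pred_sets1[OF D this] show ?thesis by simp
  qed
  have P: "Measurable.pred (PiM J (\<lambda>_. N)) (\<lambda>xs. \<forall>i\<in>J. \<forall>j\<in>J. i \<noteq> j \<longrightarrow> D (xs i) (xs j))"
    using J pij by (intro pred_intros_finite pred_intros_logic) auto
  have E: "PiE J (\<lambda>_. S) \<in> sets (PiM J (\<lambda>_. N))" using S J by (intro sets_PiM_I_finite) auto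
  have "Sep S D J = PiE J (\<lambda>_. S) \<inter> {xs \<in> space (PiM J (\<lambda>_. N)). \<forall>i\<in>J. \<forall>j\<in>J. i \<noteq> j \<longrightarrow> D (xs i) (xs j)}"
    using sets.sets_into_space[OF E] by (auto simp: Sep_def)
  then show ?thesis using E P by (auto simp: Measurable.pred_def)
qed

lemma Sep_reindex:
  assumes sf: "sigma_finite_measure N" and S: "S \<in> sets N"
    and D: "{z \<in> space (N \<Otimes>\<^sub>M N). D (fst z) (snd z)} \<in> sets (N \<Otimes>\<^sub>M N)"
    and I: "finite I" and g: "bij_betw g I K"
  shows "emeasure (PiM K (\<lambda>_. N)) (Sep S D K) = emeasure (PiM I (\<lambda>_. N)) (Sep S D I)"
proof -
  interpret product_sigma_finite "\<lambda>_. N" using sf by (simp add: product_sigma_finite_def)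
  have K: "finite K" using I g bij_betw_finite by blast
  define T where "T \<omega> = (\<lambda>i\<in>I. \<omega> (g i))" for \<omega> :: "_ \<Rightarrow> 'a"
  define h where "h = the_inv_into I g"
  have gi: "\<And>i. i \<in> I \<Longrightarrow> g i \<in> K" and hk: "\<And>k. k \<in> K \<Longrightarrow> h k \<in> I"
    and hg: "\<And>i. i \<in> I \<Longrightarrow> h (g i) = i" and gh: "\<And>k. k \<in> K \<Longrightarrow> g (h k) = k"
    using g unfolding h_def
    by (auto simp: bij_betw_def the_inv_into_f_f f_the_inv_into_f the_inv_into_into)
  have Tm: "T \<in> measurable (PiM K (\<lambda>_. N)) (PiM I (\<lambda>_. N))"
    unfolding T_def by (rule measurable_restrict) (use gi in measurable)
  have distr_eq: "distr (PiM K (\<lambda>_. N)) (PiM I (\<lambda>_. N)) T = PiM I (\<lambda>_. N)"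
  proof (rule PiM_eqI[OF I])
    show "sets (distr (PiM K (\<lambda>_. N)) (PiM I (\<lambda>_. N)) T) = sets (PiM I (\<lambda>_. N))" by simp
    fix A assume A: "\<And>i. i \<in> I \<Longrightarrow> A i \<in> sets N"
    have pre: "T -` PiE I A \<inter> space (PiM K (\<lambda>_. N)) = PiE K (\<lambda>k. A (h k))"
    proof (intro set_eqI iffI)
      fix \<omega> assume "\<omega> \<in> T -` PiE I A \<inter> space (PiM K (\<lambda>_. N))"
      then have w: "\<And>i. i \<in> I \<Longrightarrow> \<omega> (g i) \<in> A i" and ws: "\<omega> \<in> extensional K"
        by (auto simp: T_def space_PiM PiE_def Pi_iff)
      show "\<omega> \<in> PiE K (\<lambda>k. A (h k))" using w[OF hk] gh ws by (auto simp: PiE_def Pi_def)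
    next
      fix \<omega> assume w: "\<omega> \<in> PiE K (\<lambda>k. A (h k))"
      then have "\<And>i. i \<in> I \<Longrightarrow> \<omega> (g i) \<in> A i" using gi hg by (metis PiE_mem)
      then show "\<omega> \<in> T -` PiE I A \<inter> space (PiM K (\<lambda>_. N))"
        using w A[THEN sets.sets_into_space] hk
        by (auto simp: T_def space_PiM PiE_def Pi_def extensional_def) (meson subsetD)
    qed
    have "emeasure (distr (PiM K (\<lambda>_. N)) (PiM I (\<lambda>_. N)) T) (PiE I A) =
        emeasure (PiM K (\<lambda>_. N)) (PiE K (\<lambda>k. A (h k)))"
      using A I by (subst emeasure_distr[OF Tm]) (auto simp: pre intro!: sets_PiM_I_finite)
    also have "\<dots> = (\<Prod>k\<in>K. emeasure N (A (h k)))"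
      using A hk K by (subst emeasure_PiM) auto
    also have "\<dots> = (\<Prod>i\<in>I. emeasure N (A i))"
      using g hg by (subst prod.reindex_bij_betw[OF g, symmetric]) (auto intro!: prod.cong)
    finally show "emeasure (distr (PiM K (\<lambda>_. N)) (PiM I (\<lambda>_. N)) T) (PiE I A) = (\<Prod>i\<in>I. emeasure N (A i))" .
  qed
  have pre: "T -` Sep S D I \<inter> space (PiM K (\<lambda>_. N)) = Sep S D K"
  proof (intro set_eqI iffI)
    fix \<omega> assume "\<omega> \<in> T -` Sep S D I \<inter> space (PiM K (\<lambda>_. N))"
    then have w: "\<And>i. i \<in> I \<Longrightarrow> \<omega> (g i) \<in> S" and ws: "\<omega> \<in> extensional K"
      and dd: "\<And>i j. i \<in> I \<Longrightarrow> j \<in> I \<Longrightarrow> i \<noteq> j \<Longrightarrow> D (\<omega> (g i)) (\<omega> (g j))"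
      by (auto simp: T_def space_PiM PiE_def Sep_def Pi_iff)
    show "\<omega> \<in> Sep S D K" unfolding Sep_def
    proof (intro CollectI conjI ballI impI)
      show "\<omega> \<in> PiE K (\<lambda>_. S)" using w[OF hk] gh ws by (auto simp: PiE_def Pi_def)
      fix k l assume "k \<in> K" "l \<in> K" "k \<noteq> l"
      then show "D (\<omega> k) (\<omega> l)" using dd[of "h k" "h l"] hk gh by metis
    qed
  next
    fix \<omega> assume w: "\<omega> \<in> Sep S D K"
    then have "\<omega> \<in> PiE K (\<lambda>_. S)" by (simp add: Sep_def)
    then show "\<omega> \<in> T -` Sep S D I \<inter> space (PiM K (\<lambda>_. N))"
      using w gi hg S[THEN sets.sets_into_space]
      by (auto simp: T_def space_PiM PiE_def Pi_def extensional_def Sep_def) (metis)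
  qed
  have "emeasure (PiM I (\<lambda>_. N)) (Sep S D I) = emeasure (distr (PiM K (\<lambda>_. N)) (PiM I (\<lambda>_. N)) T) (Sep S D I)"
    by (simp add: distr_eq)
  also have "\<dots> = emeasure (PiM K (\<lambda>_. N)) (Sep S D K)"
    using Sep_sets[OF S D I] by (simp add: emeasure_distr[OF Tm] pre)
  finally show ?thesis by simp
qed


lemma Sep_step:
  assumes sf: "sigma_finite_measure N" and S: "S \<in> sets N"
    and D: "{z \<in> space (N \<Otimes>\<^sub>M N). D (fst z) (snd z)} \<in> sets (N \<Otimes>\<^sub>M N)"
  shows "emeasure (PiM {..<Suc t} (\<lambda>_. N)) (Sep S D {..<Suc t}) ^ t
         \<le> emeasure (PiM {..<t} (\<lambda>_. N)) (Sep S D {..<t}) ^ Suc t"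
proof (cases "t = 0")
  case True
  have "Sep S D ({}::nat set) = {\<lambda>_. undefined}" by (auto simp: Sep_def)
  then have "emeasure (PiM ({}::nat set) (\<lambda>_. N)) (Sep S D {}) = 1" by simp
  then show ?thesis using True by simp
next
  case False
  define J where "J = {..<Suc t}"
  have J: "finite J" "card J = Suc t" by (auto simp: J_def)
  have "emeasure (PiM J (\<lambda>_. N)) (Sep S D J) ^ (card J - 1)
        \<le> (\<Prod>i\<in>J. emeasure (PiM (J-{i}) (\<lambda>_. N)) (Sep S D (J - {i})))"
  proof (rule LW[OF sf J(1)])
    show "Sep S D J \<in> sets (PiM J (\<lambda>_. N))" by (rule Sep_sets[OF S D J(1)])
    show "\<forall>i\<in>J. Sep S D (J - {i}) \<in> sets (PiM (J - {i}) (\<lambda>_. N))"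
      using Sep_sets[OF S D] J by auto
    show "Sep S D J \<noteq> {} \<or> 2 \<le> card J" using J False by simp
    show "\<forall>x\<in>Sep S D J. \<forall>i\<in>J. restrict x (J - {i}) \<in> Sep S D (J - {i})"
      by (auto simp: Sep_def PiE_def Pi_def)
  qed
  also have "\<dots> = (\<Prod>i\<in>J. emeasure (PiM {..<t} (\<lambda>_. N)) (Sep S D {..<t}))"
  proof (rule prod.cong[OF refl])
    fix i assume i: "i \<in> J"
    have "card {..<t} = card (J - {i})" using i J by simp
    then obtain h where h: "bij_betw h {..<t} (J - {i})"
      using finite_same_card_bij[of "{..<t}" "J - {i}"] J by auto
    show "emeasure (PiM (J-{i}) (\<lambda>_. N)) (Sep S D (J - {i})) = emeasure (PiM {..<t} (\<lambda>_. N)) (Sep S D {..<t})"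
      by (rule Sep_reindex[OF sf S D _ h]) simp
  qed
  also have "\<dots> = emeasure (PiM {..<t} (\<lambda>_. N)) (Sep S D {..<t}) ^ Suc t" using J by simp
  finally show ?thesis using J by (simp add: J_def)
qed

lemma Sep_chain:
  assumes sf: "sigma_finite_measure N" and S: "S \<in> sets N"
    and D: "{z \<in> space (N \<Otimes>\<^sub>M N). D (fst z) (snd z)} \<in> sets (N \<Otimes>\<^sub>M N)"
    and a: "1 \<le> a" and ab: "a \<le> b"
  shows "emeasure (PiM {..<b} (\<lambda>_. N)) (Sep S D {..<b}) ^ a
         \<le> emeasure (PiM {..<a} (\<lambda>_. N)) (Sep S D {..<a}) ^ b"
  using ab
proof (induction b rule: dec_induct)
  case base
  then show ?case by simp
next
  case (step b)
  let ?M = "\<lambda>t. emeasure (PiM {..<t} (\<lambda>_. N)) (Sep S D {..<t})"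
  have b: "b > 0" using a step.hyps by simp
  have "(?M (Suc b) ^ a) ^ b = (?M (Suc b) ^ b) ^ a" by (metis power_mult mult.commute)
  also have "\<dots> \<le> (?M b ^ Suc b) ^ a" by (rule power_mono_ennreal[OF Sep_step[OF sf S D]])
  also have "\<dots> = (?M b ^ a) ^ Suc b" by (metis power_mult mult.commute)
  also have "\<dots> \<le> (?M a ^ b) ^ Suc b" by (rule power_mono_ennreal[OF step.IH])
  also have "\<dots> = (?M a ^ Suc b) ^ b" by (metis power_mult mult.commute)
  finally show ?case by (rule ennreal_pow_le_imp_le[OF _ b])
qed

lemma Sep_le:
  assumes sf: "sigma_finite_measure N" and S: "S \<in> sets N"
    and D: "{z \<in> space (N \<Otimes>\<^sub>M N). D (fst z) (snd z)} \<in> sets (N \<Otimes>\<^sub>M N)"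
  shows "emeasure (PiM {..<t} (\<lambda>_. N)) (Sep S D {..<t}) \<le> emeasure N S ^ t"
proof -
  interpret product_sigma_finite "\<lambda>_. N" using sf by (simp add: product_sigma_finite_def)
  have "emeasure (PiM {..<t} (\<lambda>_. N)) (Sep S D {..<t}) \<le> emeasure (PiM {..<t} (\<lambda>_. N)) (PiE {..<t} (\<lambda>_. S))"
    using S by (intro emeasure_mono sets_PiM_I_finite) (auto simp: Sep_def)
  also have "\<dots> = emeasure N S ^ t" using S by (subst emeasure_PiM) auto
  finally show ?thesis .
qed

lemma Rn_sf: "sigma_finite_measure (Rn n)"
proof -
  interpret product_sigma_finite "\<lambda>_::nat. lborel :: real measure"
    by (simp add: product_sigma_finite_def sigma_finite_lborel)
  show ?thesis unfolding Rn_def by (rule sigma_finite) simp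
qed

lemma pknorm_meas:
  assumes u: "\<And>l. l < n \<Longrightarrow> (\<lambda>x. u x l) \<in> borel_measurable M"
    and kb: "\<And>j. j < m \<Longrightarrow> k (Suc j) \<le> n"
  shows "(\<lambda>x. pknorm p k m (u x)) \<in> borel_measurable M"
proof -
  have 1: "(\<lambda>x. \<Sum>l\<in>{k j..<k (Suc j)}. (u x l)^2) \<in> borel_measurable M" if j: "j < m" for j
  proof (rule borel_measurable_sum)
    fix l assume "l \<in> {k j..<k (Suc j)}"
    then have "l < n" using kb[OF j] by auto
    note [measurable] = u[OF this]
    show "(\<lambda>x. (u x l)^2) \<in> borel_measurable M" by measurable
  qed
  have 2: "(\<lambda>x. \<Sum>j<m. (sqrt (\<Sum>l\<in>{k j..<k (Suc j)}. (u x l)^2)) powr p) \<in> borel_measurable M"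
  proof (rule borel_measurable_sum)
    fix j assume "j \<in> {..<m}"
    note [measurable] = 1[of j] \<open>j \<in> {..<m}\<close>[simplified]
    show "(\<lambda>x. (sqrt (\<Sum>l\<in>{k j..<k (Suc j)}. (u x l)^2)) powr p) \<in> borel_measurable M"
      using 1[of j] \<open>j \<in> {..<m}\<close> by measurable
  qed
  note [measurable] = 2
  show ?thesis unfolding pknorm_def by measurable
qed

lemma comp_Rn_meas:
  assumes "l < n"
  shows "(\<lambda>x. x l) \<in> borel_measurable (Rn n)"
proof -
  have "(\<lambda>x. x l) \<in> measurable (PiM {..<n} (\<lambda>_. lborel)) lborel"
    by (rule measurable_component_singleton) (use assms in simp)
  then show ?thesis unfolding Rn_def by simp
qed

lemma Dset_meas:
  assumes kb: "\<And>j. j < m \<Longrightarrow> k (Suc j) \<le> n"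
  shows "{z \<in> space (Rn n \<Otimes>\<^sub>M Rn n). c \<le> pkdist p k m (fst z) (snd z)} \<in> sets (Rn n \<Otimes>\<^sub>M Rn n)"
proof -
  have "(\<lambda>z. pkdist p k m (fst z) (snd z)) \<in> borel_measurable (Rn n \<Otimes>\<^sub>M Rn n)"
    unfolding pkdist_def
  proof (rule pknorm_meas[where n=n and m=m and k=k])
    fix l assume l: "l < n"
    note [measurable] = comp_Rn_meas[OF l]
    show "(\<lambda>x. snd x l - fst x l) \<in> borel_measurable (Rn n \<Otimes>\<^sub>M Rn n)" by measurable
  qed (rule kb)
  then show ?thesis by measurable
qed

lemma ball_meas:
  assumes kb: "\<And>j. j < m \<Longrightarrow> k (Suc j) \<le> n"
  shows "pkball p k m n x R \<in> sets (Rn n)"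
proof -
  have "(\<lambda>y. pkdist p k m x y) \<in> borel_measurable (Rn n)"
    unfolding pkdist_def
  proof (rule pknorm_meas[where n=n and m=m and k=k])
    fix l assume l: "l < n"
    note [measurable] = comp_Rn_meas[OF l]
    show "(\<lambda>y. y l - x l) \<in> borel_measurable (Rn n)" by measurable
  qed (rule kb)
  then show ?thesis unfolding pkball_def by measurable
qed

lemma kb_le:
  fixes k :: "nat \<Rightarrow> nat"
  assumes "strict_mono_on {..m} k" "j < m"
  shows "k (Suc j) \<le> k m"
  using assms(2) by (intro strict_mono_on_leD[OF assms(1)]) auto

lemma block_exists:
  fixes k :: "nat \<Rightarrow> nat" and l :: nat
  assumes sm: "strict_mono_on {..m} k" and k0: "k 0 = 0"
  shows "i \<le> m \<Longrightarrow> l < k i \<Longrightarrow> \<exists>j<i. k j \<le> l \<and> l < k (Suc j)"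
proof (induction i)
  case 0
  then show ?case using k0 by simp
next
  case (Suc i)
  note Suc = Suc
  show ?case
  proof (cases "l < k i")
    case True
    then show ?thesis using Suc by (metis Suc_leD less_Suc_eq)
  next
    case False
    then show ?thesis using Suc by (intro exI[of _ i]) auto
  qed
qed

lemma comp_le_pknorm:
  assumes p: "p > 0" and j: "j < m" and l: "k j \<le> l" "l < k (Suc j)"
  shows "\<bar>x l\<bar> \<le> pknorm p k m x"
proof -
  define s where "s j = sqrt (\<Sum>i\<in>{k j..<k (Suc j)}. (x i)^2)" for j
  have s0: "\<And>j. s j \<ge> 0" by (simp add: s_def sum_nonneg)
  have "\<bar>x l\<bar> = sqrt ((x l)^2)" by simp
  also have "\<dots> \<le> s j" unfolding s_def
    by (intro real_sqrt_le_mono member_le_sum) (use l in auto)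
  finally have 1: "\<bar>x l\<bar> \<le> s j" .
  have 2: "s j powr p \<le> (\<Sum>j<m. s j powr p)"
    by (rule member_le_sum) (use j in auto)
  have "s j = (s j powr p) powr (1/p)" using p s0[of j] by (simp add: powr_powr)
  also have "\<dots> \<le> (\<Sum>j<m. s j powr p) powr (1/p)"
    by (rule powr_mono2) (use p 2 in auto)
  also have "\<dots> = pknorm p k m x" by (simp add: pknorm_def s_def)
  finally show ?thesis using 1 by simp
qed

lemma pknorm_le_bound:
  assumes p: "p \<ge> 1" and m: "m \<ge> 1" and B: "B \<ge> 0"
    and bl: "\<And>j. j < m \<Longrightarrow> sqrt (\<Sum>i\<in>{k j..<k (Suc j)}. (x i)^2) \<le> B"
  shows "pknorm p k m x \<le> m * B"
proof -
  have "(\<Sum>j<m. (sqrt (\<Sum>i\<in>{k j..<k (Suc j)}. (x i)^2)) powr p) \<le> (\<Sum>j<m. B powr p)"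
    by (intro sum_mono powr_mono2) (use p bl in \<open>auto intro!: sum_nonneg\<close>)
  also have "\<dots> = m * B powr p" by simp
  finally have 1: "(\<Sum>j<m. (sqrt (\<Sum>i\<in>{k j..<k (Suc j)}. (x i)^2)) powr p) \<le> m * B powr p" .
  have "pknorm p k m x \<le> (m * B powr p) powr (1/p)"
    unfolding pknorm_def by (rule powr_mono2) (use p 1 in \<open>auto intro!: sum_nonneg\<close>)
  also have "\<dots> = m powr (1/p) * B" using p B by (simp add: powr_mult powr_powr)
  also have "\<dots> \<le> m * B"
  proof -
    have "real m powr (1/p) \<le> real m powr 1" using m p by (intro powr_mono) auto
    then show ?thesis using B m by (intro mult_right_mono) auto
  qed
  finally show ?thesis .
qed


lemma space_Rn: "space (Rn n) = PiE {..<n} (\<lambda>_. UNIV)"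
  by (simp add: Rn_def space_PiM)

lemma ball_sub_cube:
  fixes k :: "nat \<Rightarrow> nat"
  assumes p: "p > 1" and k0: "k 0 = 0" and km: "k m = n" and sm: "strict_mono_on {..m} k"
  shows "pkball p k m n (origin n) R \<subseteq> PiE {..<n} (\<lambda>_. {-R..R})"
proof
  fix y assume y: "y \<in> pkball p k m n (origin n) R"
  then have ys: "y \<in> PiE {..<n} (\<lambda>_. UNIV)" and yR: "pknorm p k m (\<lambda>i. y i - origin n i) \<le> R"
    by (auto simp: pkball_def space_Rn pkdist_def)
  have "y l \<in> {-R..R}" if l: "l < n" for l
  proof -
    obtain j where j: "j < m" "k j \<le> l" "l < k (Suc j)"
      using block_exists[OF sm k0 order_refl, of l] l km by auto
    have "\<bar>y l - origin n l\<bar> \<le> pknorm p k m (\<lambda>i. y i - origin n i)"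
      using comp_le_pknorm[OF _ j, of p "\<lambda>i. y i - origin n i"] p by simp
    then show ?thesis using yR l by (auto simp: origin_def)
  qed
  then show "y \<in> PiE {..<n} (\<lambda>_. {-R..R})" using ys by (auto simp: PiE_def Pi_def)
qed

lemma cube_sub_ball:
  fixes k :: "nat \<Rightarrow> nat"
  assumes p: "p > 1" and m: "m \<ge> 1" and k0: "k 0 = 0" and km: "k m = n" and sm: "strict_mono_on {..m} k"
    and R: "R \<ge> 0"
  shows "PiE {..<n} (\<lambda>_. {-(R/(real m * real n))..R/(real m * real n)}) \<subseteq> pkball p k m n (origin n) R"
proof -
  define a where "a = R/(real m * real n)"
  have n1: "n \<ge> 1"
  proof -
    have "k 0 < k m" using sm m by (intro strict_mono_onD[OF sm]) auto
    then show ?thesis using k0 km by simp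
  qed
  have a0: "a \<ge> 0" using R by (simp add: a_def)
  have "y \<in> pkball p k m n (origin n) R" if y: "y \<in> PiE {..<n} (\<lambda>_. {-a..a})" for y
  proof -
  from y have ys: "y \<in> space (Rn n)" by (auto simp: space_Rn PiE_def Pi_def)
  have ya: "\<And>l. l < n \<Longrightarrow> \<bar>y l - origin n l\<bar> \<le> a" using y by (auto simp: origin_def PiE_def Pi_def)
  have bl: "sqrt (\<Sum>i\<in>{k j..<k (Suc j)}. (y i - origin n i)^2) \<le> n * a" if j: "j < m" for j
  proof -
    have kj: "k (Suc j) \<le> n" using kb_le[OF sm j] km by simp
    have "(\<Sum>i\<in>{k j..<k (Suc j)}. (y i - origin n i)^2) \<le> card {k j..<k (Suc j)} * a^2"
    proof (rule sum_bounded_above)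
      fix i assume "i \<in> {k j..<k (Suc j)}"
      then have "i < n" using kj by auto
      then have "\<bar>y i - origin n i\<bar> \<le> a" by (rule ya)
      then have "\<bar>y i - origin n i\<bar>^2 \<le> a^2" by (intro power_mono) auto
      then show "(y i - origin n i)^2 \<le> a^2" by simp
    qed
    also have "\<dots> \<le> n * a^2" using kj by (intro mult_right_mono) auto
    also have "\<dots> \<le> (n * a)^2"
    proof -
      have n1r: "real n \<ge> 1" using n1 by simp
      have "real n * 1 \<le> real n * real n" using n1r by (intro mult_left_mono) auto
      then have "real n * a^2 \<le> (real n * real n) * a^2" by (intro mult_right_mono) auto
      then show ?thesis by (simp add: power_mult_distrib power2_eq_square mult_ac)
    qed
    finally have "(\<Sum>i\<in>{k j..<k (Suc j)}. (y i - origin n i)^2) \<le> (n * a)^2" .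
    then have "sqrt (\<Sum>i\<in>{k j..<k (Suc j)}. (y i - origin n i)^2) \<le> sqrt ((n * a)^2)"
      by (rule real_sqrt_le_mono)
    also have "\<dots> = n * a" using a0 by simp
    finally show ?thesis .
  qed
  have "pknorm p k m (\<lambda>i. y i - origin n i) \<le> m * (n * a)"
    by (rule pknorm_le_bound[where k=k and x="\<lambda>i. y i - origin n i", OF _ m _ bl]) (use p a0 in auto)
  also have "\<dots> = R" using m n1 by (simp add: a_def)
  finally show "y \<in> pkball p k m n (origin n) R" using ys by (simp add: pkball_def pkdist_def)
  qed
  then show ?thesis by (auto simp: a_def)
qed

lemma emeasure_cube:
  assumes "c \<ge> 0"
  shows "emeasure (Rn n) (PiE {..<n} (\<lambda>_. {-c..c})) = ennreal ((2*c)^n)"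
proof -
  interpret product_sigma_finite "\<lambda>_::nat. lborel :: real measure"
    by (simp add: product_sigma_finite_def sigma_finite_lborel)
  have "emeasure (Rn n) (PiE {..<n} (\<lambda>_. {-c..c})) = (\<Prod>i<n. emeasure lborel {-c..c})"
    unfolding Rn_def by (subst emeasure_PiM) auto
  also have "\<dots> = (\<Prod>i<n. ennreal (2*c))" using assms by simp
  also have "\<dots> = ennreal ((2*c)^n)" using assms by (simp add: ennreal_power)
  finally show ?thesis .
qed

lemma vol_ball:
  fixes k :: "nat \<Rightarrow> nat"
  assumes p: "p > 1" and m: "m \<ge> 1" and k0: "k 0 = 0" and km: "k m = n" and sm: "strict_mono_on {..m} k"
    and R: "R \<ge> 0"
  shows "emeasure (Rn n) (pkball p k m n (origin n) R) = ennreal (vol n (pkball p k m n (origin n) R))"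
    and "vol n (pkball p k m n (origin n) R) \<ge> (2 * (R/(real m * real n)))^n"
proof -
  have kb: "\<And>j. j < m \<Longrightarrow> k (Suc j) \<le> n" using kb_le[OF sm] km by simp
  have B: "pkball p k m n (origin n) R \<in> sets (Rn n)" by (rule ball_meas[where n=n and m=m and k=k, OF kb])
  have C1: "PiE {..<n} (\<lambda>_. {-R..R}) \<in> sets (Rn n)" unfolding Rn_def by (intro sets_PiM_I_finite) auto
  have C2: "PiE {..<n} (\<lambda>_. {-(R/(real m * real n))..R/(real m * real n)}) \<in> sets (Rn n)" unfolding Rn_def by (intro sets_PiM_I_finite) auto
  have "emeasure (Rn n) (pkball p k m n (origin n) R) \<le> emeasure (Rn n) (PiE {..<n} (\<lambda>_. {-R..R}))"
    by (rule emeasure_mono[OF ball_sub_cube[OF p k0 km sm] C1])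
  also have "\<dots> = ennreal ((2*R)^n)" using R by (rule emeasure_cube)
  finally have fin: "emeasure (Rn n) (pkball p k m n (origin n) R) < top"
    by (rule le_less_trans) simp
  then show eq: "emeasure (Rn n) (pkball p k m n (origin n) R) = ennreal (vol n (pkball p k m n (origin n) R))"
    by (simp add: vol_def emeasure_eq_ennreal_measure less_top)
  have "ennreal ((2 * (R/(real m * real n)))^n) = emeasure (Rn n) (PiE {..<n} (\<lambda>_. {-(R/(real m * real n))..R/(real m * real n)}))"
    using R by (simp add: emeasure_cube)
  also have "\<dots> \<le> emeasure (Rn n) (pkball p k m n (origin n) R)"
    by (rule emeasure_mono[OF cube_sub_ball[OF p m k0 km sm R] B])
  finally show "vol n (pkball p k m n (origin n) R) \<ge> (2 * (R/(real m * real n)))^n"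
    unfolding eq by (simp add: vol_def ennreal_le_iff)
qed

lemma ereal_final:
  fixes L1 L2 :: ereal
  assumes L10: "L1 \<le> 0" and H: "\<And>c. 0 < c \<Longrightarrow> c < 1 \<Longrightarrow> L2 \<le> ereal c * L1"
  shows "L2 \<le> L1"
proof (cases L1)
  case MInf
  then have "L2 \<le> ereal (1/2) * L1" using H[of "1/2"] by simp
  then show ?thesis using MInf by simp
next
  case PInf
  then show ?thesis using L10 by simp
next
  case (real l)
  then have l0: "l \<le> 0" using L10 by simp
  show ?thesis
  proof (cases L2)
    case MInf then show ?thesis by simp
  next
    case PInf then show ?thesis using H[of "1/2"] real by simp
  next
    case (real x)
    show ?thesis
    proof (rule ccontr)
      assume "\<not> L2 \<le> L1"
      then have xl: "x > l" using real \<open>L1 = ereal l\<close> by simp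
      show False
      proof (cases "l = 0")
        case True
        then show False using H[of "1/2"] real \<open>L1 = ereal l\<close> xl by simp
      next
        case False
        then have l0': "l < 0" using l0 by simp
        define d where "d = min (1/2) ((x - l) / (- 2 * l))"
        have "(x - l) / (- 2 * l) > 0" using xl l0' by (intro divide_pos_pos) auto
        then have d0: "d > 0" by (simp add: d_def)
        have d1: "d \<le> 1/2" by (simp add: d_def)
        have "d * (- l) \<le> ((x - l) / (- 2 * l)) * (- l)"
          using l0' by (intro mult_right_mono) (auto simp: d_def)
        also have "\<dots> = (x - l) / 2" using l0' by (simp add: field_simps)
        finally have dl: "d * (- l) \<le> (x - l) / 2" .
        have "L2 \<le> ereal (1 - d) * L1" using H[of "1 - d"] d0 d1 by simp
        then have "x \<le> (1 - d) * l" using real \<open>L1 = ereal l\<close> by simp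
        then show False using dl xl by (simp add: algebra_simps)
      qed
    qed
  qed
qed

lemma pointwise:
  fixes V a1 a2 c :: real and mt :: "nat \<Rightarrow> real"
  assumes V: "V > 0" and a1: "0 < a1" and a12: "a1 < a2" and c: "0 < c" "c < 1"
    and big: "a2 * V * (1 - c) \<ge> 1"
    and mt0: "\<And>t. mt t \<ge> 0" and mtle: "\<And>t. mt t \<le> V ^ t"
    and chain: "\<And>a b. 1 \<le> a \<Longrightarrow> a \<le> b \<Longrightarrow> mt b ^ a \<le> mt a ^ b"
  defines "Z \<equiv> \<lambda>t. if t = 0 then 1 else mt t / fact t"
  defines "Q \<equiv> \<lambda>a N. if Z N = 0 then -\<infinity> else ereal (ln (Z N / (V ^ N / fact N)) / (a * V))"
  shows "Q a2 (nat \<lfloor>a2 * V\<rfloor>) \<le> ereal c * Q a1 (nat \<lfloor>a1 * V\<rfloor>)"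
    and "Q a1 (nat \<lfloor>a1 * V\<rfloor>) \<le> 0"
proof -
  define N1 where "N1 = nat \<lfloor>a1 * V\<rfloor>"
  define N2 where "N2 = nat \<lfloor>a2 * V\<rfloor>"
  have ratio: "Z N / (V ^ N / fact N) = (if N = 0 then 1 else mt N / V ^ N)" for N
    using V by (simp add: Z_def field_simps)
  have Z0: "Z N = 0 \<longleftrightarrow> N \<noteq> 0 \<and> mt N = 0" for N by (simp add: Z_def)
  have qle1: "mt N / V ^ N \<le> 1" for N using mtle[of N] V by simp
  have Qle0: "Q a N \<le> 0" if a: "a > 0" for a N
  proof (cases "Z N = 0")
    case True then show ?thesis by (simp add: Q_def)
  next
    case False
    have "ln (Z N / (V ^ N / fact N)) \<le> 0"
    proof (cases "N = 0")
      case True then show ?thesis by (simp add: ratio Z_def)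
    next
      case N: False
      then have "mt N > 0" using False Z0 mt0[of N] by simp
      then have "mt N / V ^ N > 0" using V by simp
      then show ?thesis using N qle1[of N] by (subst ratio) (simp add: ln_le_zero_iff)
    qed
    then have "ln (Z N / (V ^ N / fact N)) / (a * V) \<le> 0" using a V by (simp add: divide_nonpos_pos)
    then show ?thesis using False by (simp add: Q_def)
  qed
  show "Q a1 (nat \<lfloor>a1 * V\<rfloor>) \<le> 0" using Qle0[OF a1] .
  have N12: "N1 \<le> N2" unfolding N1_def N2_def using a12 V
    by (intro nat_mono floor_mono) simp
  have N1le: "real N1 \<le> a1 * V" using a1 V by (simp add: N1_def)
  have N2ge: "real N2 > a2 * V - 1" using a1 a12 V by (simp add: N2_def)
  have main: "Q a2 N2 \<le> ereal c * Q a1 N1"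
  proof (cases "Z N2 = 0")
    case True
    then have "Q a2 N2 = -\<infinity>" by (simp add: Q_def)
    then show ?thesis by simp
  next
    case Z2: False
    show ?thesis
    proof (cases "N1 = 0")
      case True
      have "Q a1 N1 = 0" using True by (simp add: Q_def Z_def)
      then show ?thesis using Qle0[of a2 N2] a1 a12 by simp
    next
      case N1: False
      then have N2: "N2 \<noteq> 0" using N12 by simp
      have m2: "mt N2 > 0" using Z2 Z0 mt0[of N2] N2 by simp
      have "mt N2 ^ N1 \<le> mt N1 ^ N2" using chain[of N1 N2] N1 N12 by simp
      moreover have "mt N2 ^ N1 > 0" using m2 by simp
      ultimately have "mt N1 ^ N2 > 0" by linarith
      then have "mt N1 \<noteq> 0" using N2 by (cases "mt N1 = 0") (auto simp: power_0_left)
      then have m1: "mt N1 > 0" using mt0[of N1] by linarith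
      define q1 where "q1 = mt N1 / V ^ N1"
      define q2 where "q2 = mt N2 / V ^ N2"
      have q1p: "q1 > 0" and q2p: "q2 > 0" using m1 m2 V by (simp_all add: q1_def q2_def)
      have "q2 ^ N1 = mt N2 ^ N1 / V ^ (N1 * N2)"
        by (simp add: q2_def power_divide power_mult[symmetric] mult.commute)
      also have "\<dots> \<le> mt N1 ^ N2 / V ^ (N1 * N2)"
        using \<open>mt N2 ^ N1 \<le> mt N1 ^ N2\<close> V by (simp add: divide_right_mono)
      also have "\<dots> = q1 ^ N2" by (simp add: q1_def power_divide power_mult[symmetric])
      finally have "q2 ^ N1 \<le> q1 ^ N2" .
      then have "ln (q2 ^ N1) \<le> ln (q1 ^ N2)" using q1p q2p by simp
      then have lnr: "N1 * ln q2 \<le> N2 * ln q1" using q1p q2p by (simp add: ln_realpow)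
      define A where "A = ln q1"
      define B where "B = ln q2"
      have A0: "A \<le> 0" using q1p qle1[of N1] by (simp add: A_def q1_def)
      have key: "a1 * N2 \<ge> c * a2 * N1"
      proof -
        have "c * a2 * N1 \<le> c * a2 * (a1 * V)" using N1le c a1 a12 by (intro mult_left_mono) auto
        also have "\<dots> \<le> a1 * (a2 * V - 1)"
        proof -
          have "a1 * (a2 * V * (1 - c)) \<ge> a1 * 1" using big a1 by (intro mult_left_mono) auto
          then show ?thesis by (simp add: algebra_simps)
        qed
        also have "\<dots> \<le> a1 * N2" using N2ge a1 by (intro mult_left_mono) auto
        finally show ?thesis .
      qed
      have "N1 * (a1 * B) \<le> a1 * (N2 * A)" using lnr a1 by (simp add: A_def B_def mult.left_commute mult_left_mono)
      also have "\<dots> = (a1 * N2) * A" by simp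
      also have "\<dots> \<le> (c * a2 * N1) * A" using key A0 by (rule mult_right_mono_neg)
      also have "\<dots> = N1 * (c * a2 * A)" by simp
      finally have "a1 * B \<le> c * a2 * A" using N1 by simp
      then have "B / (a2 * V) \<le> c * (A / (a1 * V))"
        using a1 a12 V by (simp add: field_simps)
      moreover have r1: "Z N1 / (V ^ N1 / fact N1) = q1" using ratio[of N1] N1 by (simp add: q1_def)
      moreover have r2: "Z N2 / (V ^ N2 / fact N2) = q2" using ratio[of N2] N2 by (simp add: q2_def)
      moreover have "Z N1 \<noteq> 0" using Z0 m1 by simp
      ultimately show ?thesis using Z2 unfolding Q_def A_def B_def by simp
    qed
  qed
  then show "Q a2 (nat \<lfloor>a2 * V\<rfloor>) \<le> ereal c * Q a1 (nat \<lfloor>a1 * V\<rfloor>)"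
    by (simp add: N1_def N2_def)
qed

theorem lemma19:
  fixes p :: real and k :: "nat \<Rightarrow> nat" and m n :: nat and \<alpha>1 \<alpha>2 :: real
  assumes "p > 1" and "m \<ge> 1" and "k 0 = 0" and "k m = n"
    and "strict_mono_on {..m} k"
    and "0 < \<alpha>1" and "\<alpha>1 < \<alpha>2"
  shows "entropy_density p k m n \<alpha>1 \<ge> entropy_density p k m n \<alpha>2"
proof -
  note p = assms(1) and m = assms(2) and k0 = assms(3) and km = assms(4) and sm = assms(5)
    and a1 = assms(6) and a12 = assms(7)
  have kb: "\<And>j. j < m \<Longrightarrow> k (Suc j) \<le> n" using kb_le[OF sm] km by simp
  have n1: "n \<ge> 1"
  proof -
    have "k 0 < k m" using sm m by (intro strict_mono_onD[OF sm]) auto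
    then show ?thesis using k0 km by simp
  qed
  define D where "D = (\<lambda>x y. 2 * unit_radius p k m n \<le> pkdist p k m x y)"
  define S where "S (R::real) = pkball p k m n (origin n) R" for R
  define V where "V R = vol n (S R)" for R
  define Mt where "Mt (R::real) (t::nat) = emeasure (PiM {..<t} (\<lambda>_. Rn n)) (Sep (S R) D {..<t})" for R t
  define mt where "mt (R::real) (t::nat) = enn2real (Mt R t)" for R t
  define Zr where "Zr (R::real) (t::nat) = (if t = 0 then 1 else mt R t / fact t)" for R t
  have sf: "sigma_finite_measure (Rn n)" by (rule Rn_sf)
  have Ss: "\<And>R. S R \<in> sets (Rn n)" unfolding S_def by (rule ball_meas[where n=n and m=m and k=k, OF kb])
  have Dm: "{z \<in> space (Rn n \<Otimes>\<^sub>M Rn n). D (fst z) (snd z)} \<in> sets (Rn n \<Otimes>\<^sub>M Rn n)"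
    unfolding D_def by (rule Dset_meas[where n=n and m=m and k=k, OF kb])
  have SV: "emeasure (Rn n) (S R) = ennreal (V R)" if "R \<ge> 0" for R
    unfolding S_def V_def by (rule vol_ball(1)[OF p m k0 km sm that])
  have Vge: "V R \<ge> (2 * (R/(real m * real n)))^n" if "R \<ge> 0" for R
    unfolding S_def V_def by (rule vol_ball(2)[OF p m k0 km sm that])
  have V0: "V R \<ge> 0" for R by (simp add: V_def vol_def)
  have Mtle: "Mt R t \<le> ennreal (V R ^ t)" if R: "R \<ge> 0" for R t
    using Sep_le[OF sf Ss[of R] Dm, of t] SV[OF R] V0 by (simp add: Mt_def ennreal_power)
  have Mt_eq: "Mt R t = ennreal (mt R t)" if R: "R \<ge> 0" for R t
  proof -
    have "Mt R t < top" using Mtle[OF R, of t] by (rule le_less_trans) simp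
    then show ?thesis by (simp add: mt_def less_top)
  qed
  have mt0: "mt R t \<ge> 0" for R t by (simp add: mt_def)
  have mtle: "mt R t \<le> V R ^ t" if R: "R \<ge> 0" for R t
    using Mtle[OF R, of t] Mt_eq[OF R, of t] V0 by (simp add: ennreal_le_iff)
  have mtchain: "mt R b ^ a \<le> mt R a ^ b" if R: "R \<ge> 0" and "1 \<le> a" "a \<le> b" for R a b
  proof -
    have "Mt R b ^ a \<le> Mt R a ^ b" unfolding Mt_def by (rule Sep_chain[OF sf Ss[of R] Dm that(2,3)])
    then show ?thesis using Mt_eq[OF R] mt0 by (simp add: ennreal_power ennreal_le_iff)
  qed
  have Zhat_eq: "Zhat p k m n (S R) t = Zr R t" if R: "R \<ge> 0" for R t
  proof -
    have "{xs \<in> PiE {..<t} (\<lambda>_. S R). \<forall>i<t. \<forall>j<t. i \<noteq> j \<longrightarrow>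
           pkdist p k m (xs i) (xs j) \<ge> 2 * unit_radius p k m n} = Sep (S R) D {..<t}"
      by (auto simp: Sep_def D_def)
    then show ?thesis by (simp add: Zhat_def Zr_def mt_def Mt_def measure_def)
  qed
  have quot_eq: "entropy_quot p k m n \<alpha> R =
     (if Zr R (nat \<lfloor>\<alpha> * V R\<rfloor>) = 0 then -\<infinity>
      else ereal (ln (Zr R (nat \<lfloor>\<alpha> * V R\<rfloor>) / (V R ^ (nat \<lfloor>\<alpha> * V R\<rfloor>) / fact (nat \<lfloor>\<alpha> * V R\<rfloor>))) / (\<alpha> * V R)))"
    if R: "R \<ge> 0" for \<alpha> R
    unfolding entropy_quot_def Let_def S_def[symmetric] V_def[symmetric] Zhat_eq[OF R] ..
  have evV: "eventually (\<lambda>R. R \<ge> 0 \<and> V R \<ge> B) at_top" for B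
  proof -
    define C where "C = real m * real n / 2 * (\<bar>B\<bar> + 1)"
    have mn: "real m * real n > 0" using m n1 by simp
    have "R \<ge> 0 \<and> V R \<ge> B" if R: "R \<ge> C" for R
    proof -
      have C0: "C \<ge> 0" using mn by (simp add: C_def)
      define s where "s = 2 * (R/(real m * real n))"
      have "s \<ge> 2 * (C/(real m * real n))" using R mn by (simp add: s_def divide_right_mono)
      also have "2 * (C/(real m * real n)) = \<bar>B\<bar> + 1" using m n1 by (simp add: C_def field_simps)
      finally have s1: "s \<ge> \<bar>B\<bar> + 1" .
      have "s \<le> s ^ n" using s1 n1 by (intro self_le_power) auto
      also have "\<dots> \<le> V R" using Vge[of R] R C0 by (simp add: s_def)
      finally show ?thesis using s1 R C0 by linarith
    qed
    then show ?thesis unfolding eventually_at_top_linorder by blast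
  qed
  define q where "q \<alpha> = entropy_quot p k m n \<alpha>" for \<alpha>
  have step: "eventually (\<lambda>R. q \<alpha>2 R \<le> ereal c * q \<alpha>1 R) at_top" if c: "0 < c" "c < 1" for c
  proof -
    have "q \<alpha>2 R \<le> ereal c * q \<alpha>1 R" if R: "R \<ge> 0" and VB: "V R \<ge> 1 / (\<alpha>2 * (1 - c))" for R
    proof -
      have pos: "\<alpha>2 * (1 - c) > 0" using a1 a12 c by simp
      then have Vp: "V R > 0" using VB by (meson divide_pos_pos less_le_trans zero_less_one)
      have big: "\<alpha>2 * V R * (1 - c) \<ge> 1" using VB pos by (simp add: divide_le_eq mult_ac)
      from pointwise(1)[OF Vp a1 a12 c big mt0 mtle[OF R] mtchain[OF R]]
      show ?thesis unfolding q_def quot_eq[OF R] Zr_def .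
    qed
    then show ?thesis using evV[of "1 / (\<alpha>2 * (1 - c))"] by (auto elim: eventually_mono)
  qed
  have le0: "eventually (\<lambda>R. q \<alpha>1 R \<le> 0) at_top"
  proof -
    have "q \<alpha>1 R \<le> 0" if R: "R \<ge> 0" and VB: "V R \<ge> 1 / (\<alpha>2 * (1 - 1/2))" for R
    proof -
      have pos: "\<alpha>2 * (1 - 1/2) > 0" using a1 a12 by simp
      then have Vp: "V R > 0" using VB by (meson divide_pos_pos less_le_trans zero_less_one)
      have big: "\<alpha>2 * V R * (1 - 1/2) \<ge> 1" using VB pos by (simp add: divide_le_eq mult_ac)
      have h: "(0::real) < 1/2" "(1/2::real) < 1" by simp_all
      from pointwise(2)[OF Vp a1 a12 h big mt0 mtle[OF R] mtchain[OF R]]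
      show ?thesis unfolding q_def quot_eq[OF R] Zr_def .
    qed
    then show ?thesis using evV[of "1 / (\<alpha>2 * (1 - 1/2))"] by (auto elim: eventually_mono)
  qed
  have L10: "Liminf at_top (q \<alpha>1) \<le> 0"
    using Liminf_le_Limsup[of at_top "q \<alpha>1"] Limsup_bounded[OF le0] by simp
  have "Liminf at_top (q \<alpha>2) \<le> Liminf at_top (q \<alpha>1)"
  proof (rule ereal_final[OF L10])
    fix c :: real assume c: "0 < c" "c < 1"
    have "Liminf at_top (q \<alpha>2) \<le> Liminf at_top (\<lambda>R. ereal c * q \<alpha>1 R)"
      by (rule Liminf_mono[OF step[OF c]])
    also have "\<dots> = ereal c * Liminf at_top (q \<alpha>1)"
      using c by (intro Liminf_ereal_mult_left) auto
    finally show "Liminf at_top (q \<alpha>2) \<le> ereal c * Liminf at_top (q \<alpha>1)" .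
  qed
  then show ?thesis by (simp add: entropy_density_def q_def)
qed

end
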